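(* Let $p\ge1$ and let $n\ge1$ be a natural number whose Zeckendorf representation is $[n]=\varepsilon_p\varepsilon_{p-1}\cdots\varepsilon_1$ with $\varepsilon_p=1$. Then for every word $u\in(\vartheta_1^p(b))^{\varepsilon_p}(\vartheta_1^{p-1}(b))^{\varepsilon_{p-1}}\cdots(\vartheta_1(b))^{\varepsilon_1}$, at least one of the words $uab$ or $uba$ is a prefix of some word in $\vartheta_1^{p+1}(a)$.
   Context: Fibonacci numbers: $f_0=f_1=1$, $f_n=f_{n-1}+f_{n-2}$ for $n\ge2$. Every positive integer $n$ has a unique Zeckendorf representation $n=\sum_{i=1}^r\varepsilon_if_i$ with $\varepsilon_i\in\{0,1\}$, $\varepsilon_r=1$ and $\varepsilon_i\varepsilon_{i+1}=0$; one writes $[n]=\varepsilon_r\cdots\varepsilon_1$. The random Fibonacci substitution is $\vartheta_1\colon a\mapsto\{ab,ba\},\ b\mapsto\{a\}$, extended to words by set concatenation ($AB=\{xy\mid x\in A,y\in B\}$) and to sets by unions; $\vartheta_1^p$ is its $p$-fold iterate. For a set $A$ of words, $A^0=\{\text{empty word}\}$ and $A^{k}=A\cdots A$ ($k$ factors). Note $|\vartheta_1^i(b)|=f_i$ for all words in that set. *)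

theory Defs
  imports Main "HOL-Library.Sublist"
begin

fun fibo :: "nat \<Rightarrow> nat" where
  "fibo 0 = 1"
| "fibo (Suc 0) = 1"
| "fibo (Suc (Suc n)) = fibo (Suc n) + fibo n"

datatype letter = a | b

definition conc :: "'x list set \<Rightarrow> 'x list set \<Rightarrow> 'x list set" where
  "conc S T = {x @ y | x y. x \<in> S \<and> y \<in> T}"

fun setpow :: "'x list set \<Rightarrow> nat \<Rightarrow> 'x list set" where
  "setpow S 0 = {[]}"
| "setpow S (Suc k) = conc S (setpow S k)"

fun theta1_letter :: "letter \<Rightarrow> letter list set" where
  "theta1_letter a = {[a, b], [b, a]}"
| "theta1_letter b = {[a]}"

fun theta1_word :: "letter list \<Rightarrow> letter list set" where
  "theta1_word [] = {[]}"
| "theta1_word (x # xs) = conc (theta1_letter x) (theta1_word xs)"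

definition theta1_set :: "letter list set \<Rightarrow> letter list set" where
  "theta1_set S = (\<Union>w\<in>S. theta1_word w)"

definition theta1_pow :: "nat \<Rightarrow> letter list \<Rightarrow> letter list set" where
  "theta1_pow p w = (theta1_set ^^ p) {w}"

fun zeck_words :: "(nat \<Rightarrow> nat) \<Rightarrow> nat \<Rightarrow> letter list set" where
  "zeck_words eps 0 = {[]}"
| "zeck_words eps (Suc k) =
     conc (setpow (theta1_pow (Suc k) [b]) (eps (Suc k))) (zeck_words eps k)"

end

theory Submission
  imports Defs
begin

abbreviation "AA k \<equiv> theta1_pow k [a]"
abbreviation "BB k \<equiv> theta1_pow k [b]"

lemma word_app: "v \<in> theta1_word x \<Longrightarrow> w \<in> theta1_word y \<Longrightarrow> v @ w \<in> theta1_word (x @ y)"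
proof (induction x arbitrary: v)
  case Nil then show ?case by simp
next
  case (Cons c x)
  from Cons.prems(1) obtain v1 v2 where "v = v1 @ v2" "v1 \<in> theta1_letter c" "v2 \<in> theta1_word x"
    by (auto simp: conc_def)
  moreover have "v2 @ w \<in> theta1_word (x @ y)" using Cons.IH[OF \<open>v2 \<in> theta1_word x\<close> Cons.prems(2)] .
  ultimately have "v1 @ (v2 @ w) \<in> conc (theta1_letter c) (theta1_word (x @ y))"
    unfolding conc_def by blast
  then show ?case using \<open>v = v1 @ v2\<close> by simp
qed

lemma pow_Suc: "theta1_pow (Suc k) w = theta1_set (theta1_pow k w)"
  by (simp add: theta1_pow_def)

lemma pow_app: "v \<in> theta1_pow p x \<Longrightarrow> w \<in> theta1_pow p y \<Longrightarrow> v @ w \<in> theta1_pow p (x @ y)"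
proof (induction p arbitrary: v w)
  case 0 then show ?case by (simp add: theta1_pow_def)
next
  case (Suc p)
  from Suc.prems obtain v0 w0 where "v0 \<in> theta1_pow p x" "v \<in> theta1_word v0"
     "w0 \<in> theta1_pow p y" "w \<in> theta1_word w0"
    by (auto simp: pow_Suc theta1_set_def)
  with Suc.IH[of v0 w0] word_app[of v v0 w w0] show ?case
    by (auto simp: pow_Suc theta1_set_def)
qed

lemma pow_union: "(theta1_set ^^ k) S = (\<Union>w\<in>S. theta1_pow k w)"
proof (induction k)
  case 0 then show ?case by (auto simp: theta1_pow_def)
next
  case (Suc k)
  show ?case using Suc by (auto simp: theta1_pow_def theta1_set_def)
qed

lemma pow_Suc2: "theta1_pow (Suc k) w = (\<Union>w'\<in>theta1_word w. theta1_pow k w')"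
proof -
  have "theta1_pow (Suc k) w = (theta1_set ^^ k) (theta1_set {w})"
    unfolding theta1_pow_def by (simp add: funpow_Suc_right del: funpow.simps)
  also have "\<dots> = (\<Union>w'\<in>theta1_word w. theta1_pow k w')"
    by (simp add: pow_union theta1_set_def)
  finally show ?thesis .
qed

lemma BB_Suc: "BB (Suc k) = AA k"
  by (simp add: pow_Suc2 conc_def)

lemma AA_Suc1: "v \<in> AA k \<Longrightarrow> y \<in> BB k \<Longrightarrow> v @ y \<in> AA (Suc k)"
  using pow_app[of v k "[a]" y "[b]"] by (auto simp: pow_Suc2 conc_def)

lemma AA_Suc2: "y \<in> BB k \<Longrightarrow> v \<in> AA k \<Longrightarrow> y @ v \<in> AA (Suc k)"
  using pow_app[of y k "[b]" v "[a]"] by (auto simp: pow_Suc2 conc_def)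

lemma nonempty: "AA k \<noteq> {} \<and> BB k \<noteq> {}"
proof (induction k)
  case 0 then show ?case by (simp add: theta1_pow_def)
next
  case (Suc k)
  then obtain v y where "v \<in> AA k" "y \<in> BB k" by blast
  then show ?case using AA_Suc1 BB_Suc by blast
qed

lemma extend: "j \<le> k \<Longrightarrow> v \<in> AA j \<Longrightarrow> \<exists>w\<in>AA k. prefix v w"
proof (induction k rule: dec_induct)
  case base then show ?case by auto
next
  case (step k)
  then obtain w where w: "w \<in> AA k" "prefix v w" by blast
  obtain y where "y \<in> BB k" using nonempty by blast
  with w AA_Suc1 show ?case by (meson prefix_append prefix_order.trans)
qed

lemma ab_in: "[a, b] \<in> AA 1"
  by (simp add: pow_Suc2 conc_def theta1_pow_def theta1_set_def)

lemma R:
  "\<forall>i\<in>{1..m}. eps i \<in> {0, 1} \<Longrightarrow> \<forall>i\<in>{1..<m}. eps i * eps (Suc i) = 0 \<Longrightarrow>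
   u \<in> zeck_words eps m \<Longrightarrow>
   \<exists>w\<in>AA (Suc m). prefix (u @ [a, b]) w \<or> prefix (u @ [b, a]) w"
proof (induction m arbitrary: u rule: less_induct)
  case (less m)
  show ?case
  proof (cases m)
    case 0
    then show ?thesis using less.prems ab_in by auto
  next
    case (Suc m')
    have e: "eps (Suc m') = 0 \<or> eps (Suc m') = 1" using less.prems(1) Suc by auto
    then show ?thesis
    proof
      assume e0: "eps (Suc m') = 0"
      hence "u \<in> zeck_words eps m'" using less.prems(3) Suc by (simp add: conc_def)
      then obtain w where w: "w \<in> AA (Suc m')" "prefix (u @ [a, b]) w \<or> prefix (u @ [b, a]) w"
        using less.IH[of m' u] less.prems Suc by auto
      obtain w2 where "w2 \<in> AA (Suc m)" "prefix w w2" using extend[OF _ w(1), of "Suc m"] Suc by auto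
      then show ?thesis using w(2) by (meson prefix_order.trans)
    next
      assume e1: "eps (Suc m') = 1"
      then obtain x u' where xu: "u = x @ u'" "x \<in> AA m'" "u' \<in> zeck_words eps m'"
        using less.prems(3) Suc by (auto simp: conc_def BB_Suc)
      have "\<exists>w'\<in>AA (Suc m'). prefix (u' @ [a, b]) w' \<or> prefix (u' @ [b, a]) w'"
      proof (cases m')
        case 0
        then show ?thesis using xu ab_in by auto
      next
        case (Suc m'')
        have "m' \<in> {1..<m}" using Suc \<open>m = Suc m'\<close> by simp
        hence "eps m' * eps (Suc m') = 0" using less.prems(2) \<open>m = Suc m'\<close> by blast
        hence "eps m' = 0" using e1 by simp
        hence "u' \<in> zeck_words eps m''" using xu Suc by (simp add: conc_def)
        then obtain w where w: "w \<in> AA (Suc m'')" "prefix (u' @ [a, b]) w \<or> prefix (u' @ [b, a]) w"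
          using less.IH[of m'' u'] less.prems Suc \<open>m = Suc m'\<close> by auto
        obtain w2 where "w2 \<in> AA (Suc m')" "prefix w w2" using extend[OF _ w(1), of "Suc m'"] Suc by auto
        then show ?thesis using w(2) by (meson prefix_order.trans)
      qed
      then obtain w' where w': "w' \<in> AA (Suc m')" "prefix (u' @ [a, b]) w' \<or> prefix (u' @ [b, a]) w'"
        by blast
      have mem: "x @ w' \<in> AA (Suc m)" using AA_Suc2[of x "Suc m'" w'] xu(2) w'(1) BB_Suc Suc by auto
      have pr: "prefix (u @ [a, b]) (x @ w') \<or> prefix (u @ [b, a]) (x @ w')"
        using w'(2) unfolding xu(1) by simp
      show ?thesis using pr mem by (rule bexI)
    qed
  qed
qed

theorem mainTheorem4:
  fixes p n :: nat and eps :: "nat \<Rightarrow> nat" and u :: "letter list"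
  assumes "p \<ge> 1" and "n \<ge> 1"
    and "\<forall>i\<in>{1..p}. eps i \<in> {0, 1}"
    and "eps p = 1"
    and "\<forall>i\<in>{1..<p}. eps i * eps (Suc i) = 0"
    and "n = (\<Sum>i=1..p. eps i * fibo i)"
    and "u \<in> zeck_words eps p"
  shows "\<exists>w \<in> theta1_pow (p + 1) [a]. prefix (u @ [a, b]) w \<or> prefix (u @ [b, a]) w"
proof -
  have "p + 1 = Suc p" by simp
  then show ?thesis using R[OF assms(3) assms(5) assms(7)] by (simp only:)
qed

end
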